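(* Let $0<\lambda<1$, $0<\beta<1$. The nonzero proper ideals of $\mathcal{B}'(\lambda,\beta)$ are exactly the following: (i) if $\beta=\lambda\neq\tfrac12$: $\mathbb{R}c\subset\operatorname{span}\{b,c\}\subset\operatorname{span}\{a,b,c\}$; (ii) if $\beta=1-\lambda$, $\lambda\neq\tfrac12$: $\mathbb{R}c\subset\operatorname{span}\{a,c\}\subset\operatorname{span}\{a,b,c\}$; (iii) if $\beta\neq\lambda$ and $\beta\neq 1-\lambda$: $\mathbb{R}c\subset\operatorname{span}\{a,b,c\}$; (iv) if $\lambda=\beta=\tfrac12$: $\mathbb{R}c$, $\operatorname{span}\{a,c\}$, $\operatorname{span}\{b,c\}$, $\operatorname{span}\{a,b,c\}$ (with $\mathbb{R}c$ contained in both $2$-dimensional ideals, which are both contained in $\operatorname{span}\{a,b,c\}$).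
   Context: For real parameters $0<\lambda<1$ and $0<\beta<1$, $\mathcal{B}'(\lambda,\beta)$ denotes the commutative (non-associative) $4$-dimensional real algebra with basis $\{o,a,b,c\}$ whose bilinear commutative multiplication $\circ$ is determined by $o\circ o=o$, $o\circ a=\lambda a$, $o\circ b=\lambda b$, $a\circ a=a$, $b\circ b=b$, $a\circ b=\frac{\lambda-\beta}{\lambda}a+\frac{\lambda+\beta-1}{\lambda}b+c$, and $c\circ x=x\circ c=0$ for every $x$. (In the paper the basis vector $c$ is written $ab$.) An ideal is a linear subspace $I$ with $x\circ I\subseteq I$ for all $x$ in the algebra. *)

theory Defs
  imports "HOL-Analysis.Analysis"
begin

text \<open>The algebra B'(lambda,beta) is modelled on real^4; the basis vectors
o, a, b, c are the standard basis vectors with indices 1,2,3,4.\<close>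

definition bo :: "real^4" where "bo = axis 1 1"
definition ba :: "real^4" where "ba = axis 2 1"
definition bb :: "real^4" where "bb = axis 3 1"
definition bc :: "real^4" where "bc = axis 4 1"

definition Btab :: "real \<Rightarrow> real \<Rightarrow> 4 \<Rightarrow> 4 \<Rightarrow> real^4" where
  "Btab lam bet i j =
     (if i = 1 \<and> j = 1 then bo
      else if (i = 1 \<and> j = 2) \<or> (i = 2 \<and> j = 1) then lam *\<^sub>R ba
      else if (i = 1 \<and> j = 3) \<or> (i = 3 \<and> j = 1) then lam *\<^sub>R bb
      else if i = 2 \<and> j = 2 then ba
      else if i = 3 \<and> j = 3 then bb
      else if (i = 2 \<and> j = 3) \<or> (i = 3 \<and> j = 2) then
        ((lam - bet) / lam) *\<^sub>R ba + ((lam + bet - 1) / lam) *\<^sub>R bb + bc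
      else 0)"

definition Bmult :: "real \<Rightarrow> real \<Rightarrow> real^4 \<Rightarrow> real^4 \<Rightarrow> real^4" where
  "Bmult lam bet x y = (\<Sum>i\<in>UNIV. \<Sum>j\<in>UNIV. (x $ i * y $ j) *\<^sub>R Btab lam bet i j)"

definition B_ideal :: "real \<Rightarrow> real \<Rightarrow> (real^4) set \<Rightarrow> bool" where
  "B_ideal lam bet I \<longleftrightarrow> subspace I \<and> (\<forall>x. \<forall>y\<in>I. Bmult lam bet x y \<in> I)"

definition nonzero_proper_ideal :: "real \<Rightarrow> real \<Rightarrow> (real^4) set \<Rightarrow> bool" where
  "nonzero_proper_ideal lam bet I \<longleftrightarrow> B_ideal lam bet I \<and> I \<noteq> {0} \<and> I \<noteq> UNIV"

end

theory Submission
  imports Defs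
begin

lemma comps:
  "bo $ i = (if i = 1 then 1 else 0)" "ba $ i = (if i = 2 then 1 else 0)"
  "bb $ i = (if i = 3 then 1 else 0)" "bc $ i = (if i = 4 then 1 else 0)"
  by (auto simp: bo_def ba_def bb_def bc_def axis_def)

lemma vec4_eq: "(x::real^4) = y \<longleftrightarrow> x$1 = y$1 \<and> x$2 = y$2 \<and> x$3 = y$3 \<and> x$4 = y$4"
  by (auto simp: vec_eq_iff forall_4)

lemma Bm:
  "Bmult l t x y $ 1 = x$1 * y$1"
  "Bmult l t x y $ 2 = l * (x$1*y$2 + x$2*y$1) + x$2*y$2 + ((l-t)/l) * (x$2*y$3 + x$3*y$2)"
  "Bmult l t x y $ 3 = l * (x$1*y$3 + x$3*y$1) + x$3*y$3 + ((l+t-1)/l) * (x$2*y$3 + x$3*y$2)"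
  "Bmult l t x y $ 4 = x$2*y$3 + x$3*y$2"
  by (simp_all add: Bmult_def sum_4 Btab_def comps algebra_simps)

definition "Sc = {x::real^4. x$1 = 0 \<and> x$2 = 0 \<and> x$3 = 0}"
definition "Sac = {x::real^4. x$1 = 0 \<and> x$3 = 0}"
definition "Sbc = {x::real^4. x$1 = 0 \<and> x$2 = 0}"
definition "SW = {x::real^4. x$1 = 0}"

lemma span_c: "span {bc} = Sc"
proof
  show "span {bc} \<subseteq> Sc"
    by (rule span_minimal) (auto simp: Sc_def subspace_def comps)
  show "Sc \<subseteq> span {bc}"
  proof
    fix x assume "x \<in> Sc"
    then have "x = (x$4) *\<^sub>R bc" by (simp add: Sc_def vec4_eq comps)
    then show "x \<in> span {bc}" by (metis span_base span_scale insertI1)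
  qed
qed

lemma span_ac: "span {ba, bc} = Sac"
proof
  show "span {ba, bc} \<subseteq> Sac"
    by (rule span_minimal) (auto simp: Sac_def subspace_def comps)
  show "Sac \<subseteq> span {ba, bc}"
  proof
    fix x assume "x \<in> Sac"
    then have "x = (x$2) *\<^sub>R ba + (x$4) *\<^sub>R bc" by (simp add: Sac_def vec4_eq comps)
    then show "x \<in> span {ba, bc}"
      by (metis span_base span_scale span_add insertI1 insertI2)
  qed
qed

lemma span_bc: "span {bb, bc} = Sbc"
proof
  show "span {bb, bc} \<subseteq> Sbc"
    by (rule span_minimal) (auto simp: Sbc_def subspace_def comps)
  show "Sbc \<subseteq> span {bb, bc}"
  proof
    fix x assume "x \<in> Sbc"
    then have "x = (x$3) *\<^sub>R bb + (x$4) *\<^sub>R bc" by (simp add: Sbc_def vec4_eq comps)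
    then show "x \<in> span {bb, bc}"
      by (metis span_base span_scale span_add insertI1 insertI2)
  qed
qed

lemma span_abc: "span {ba, bb, bc} = SW"
proof
  show "span {ba, bb, bc} \<subseteq> SW"
    by (rule span_minimal) (auto simp: SW_def subspace_def comps)
  show "SW \<subseteq> span {ba, bb, bc}"
  proof
    fix x assume "x \<in> SW"
    then have "x = (x$2) *\<^sub>R ba + (x$3) *\<^sub>R bb + (x$4) *\<^sub>R bc" by (simp add: SW_def vec4_eq comps)
    then show "x \<in> span {ba, bb, bc}"
      by (metis span_base span_scale span_add insertI1 insertI2)
  qed
qed

lemma nz_c: "nonzero_proper_ideal l t Sc"
proof -
  have "bc \<in> Sc" "bc \<noteq> 0" "bo \<notin> Sc" by (auto simp: Sc_def comps vec4_eq)
  moreover have "B_ideal l t Sc"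
    by (auto simp: B_ideal_def Sc_def subspace_def Bm)
  ultimately show ?thesis unfolding nonzero_proper_ideal_def by auto
qed

lemma nz_W: "nonzero_proper_ideal l t SW"
proof -
  have "bc \<in> SW" "bc \<noteq> 0" "bo \<notin> SW" by (auto simp: SW_def comps vec4_eq)
  moreover have "B_ideal l t SW"
    by (auto simp: B_ideal_def SW_def subspace_def Bm)
  ultimately show ?thesis unfolding nonzero_proper_ideal_def by auto
qed

lemma nz_ac: "l + t - 1 = 0 \<Longrightarrow> nonzero_proper_ideal l t Sac"
proof -
  assume q: "l + t - 1 = 0"
  have "bc \<in> Sac" "bc \<noteq> 0" "bo \<notin> Sac" by (auto simp: Sac_def comps vec4_eq)
  moreover have "B_ideal l t Sac"
    using q by (auto simp: B_ideal_def Sac_def subspace_def Bm)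
  ultimately show ?thesis unfolding nonzero_proper_ideal_def by auto
qed

lemma nz_bc: "l - t = 0 \<Longrightarrow> nonzero_proper_ideal l t Sbc"
proof -
  assume q: "l - t = 0"
  have "bc \<in> Sbc" "bc \<noteq> 0" "bo \<notin> Sbc" by (auto simp: Sbc_def comps vec4_eq)
  moreover have "B_ideal l t Sbc"
    using q by (auto simp: B_ideal_def Sbc_def subspace_def Bm)
  ultimately show ?thesis unfolding nonzero_proper_ideal_def by auto
qed


lemma classify:
  assumes l: "0 < l" "l < 1" and nz: "nonzero_proper_ideal l t I"
  shows "I = Sc \<or> I = SW \<or> (l + t - 1 = 0 \<and> I = Sac) \<or> (l - t = 0 \<and> I = Sbc)"
proof -
  have sub: "subspace I" and cl: "\<And>x y. y \<in> I \<Longrightarrow> Bmult l t x y \<in> I"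
    and ne: "I \<noteq> {0}" and nU: "I \<noteq> UNIV"
    using nz by (auto simp: nonzero_proper_ideal_def B_ideal_def)
  have add: "\<And>u w. u \<in> I \<Longrightarrow> w \<in> I \<Longrightarrow> u + w \<in> I" using sub by (simp add: subspace_add)
  have sc: "\<And>u c. u \<in> I \<Longrightarrow> c *\<^sub>R u \<in> I" using sub by (simp add: subspace_scale)
  have df: "\<And>u w. u \<in> I \<Longrightarrow> w \<in> I \<Longrightarrow> u - w \<in> I" using sub by (simp add: subspace_diff)
  have z: "0 \<in> I" using sub by (simp add: subspace_0)
  have unsc: "\<And>u c. c *\<^sub>R u \<in> I \<Longrightarrow> c \<noteq> 0 \<Longrightarrow> u \<in> I"
  proof -
    fix u c assume h: "c *\<^sub>R u \<in> I" "c \<noteq> (0::real)"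
    have "u = (1/c) *\<^sub>R (c *\<^sub>R u)" using h(2) by simp
    then show "u \<in> I" using h(1) sc by metis
  qed
  define p where "p = (l - t) / l"
  define q where "q = (l + t - 1) / l"
  have Bm': "\<And>x y. Bmult l t x y $ 2 = l * (x$1*y$2 + x$2*y$1) + x$2*y$2 + p * (x$2*y$3 + x$3*y$2)"
    "\<And>x y. Bmult l t x y $ 3 = l * (x$1*y$3 + x$3*y$1) + x$3*y$3 + q * (x$2*y$3 + x$3*y$2)"
    by (simp_all add: Bm p_def q_def)
  note B = Bm(1) Bm(4) Bm'
  have abI: "I = SW" if "ba \<in> I" "bb \<in> I" "\<forall>v\<in>I. v$1 = 0" "bc \<in> I"
  proof
    show "I \<subseteq> SW" using that by (auto simp: SW_def)
    show "SW \<subseteq> I"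
    proof
      fix x assume "x \<in> SW"
      then have "x = (x$2) *\<^sub>R ba + (x$3) *\<^sub>R bb + (x$4) *\<^sub>R bc" by (simp add: SW_def vec4_eq comps)
      then show "x \<in> I" using that add sc by metis
    qed
  qed
  have s1: "\<forall>v\<in>I. v$1 = 0"
  proof (rule ccontr)
    assume "\<not> (\<forall>v\<in>I. v$1 = 0)"
    then obtain v where v: "v \<in> I" "v$1 \<noteq> 0" by auto
    define w1 where "w1 = Bmult l t bo v"
    define w2 where "w2 = Bmult l t bo w1"
    have w: "w1 \<in> I" "w2 \<in> I" using cl v by (auto simp: w1_def w2_def)
    have "bo = (1/((l-1)*(v$1))) *\<^sub>R (l *\<^sub>R w1 - w2)"
    proof -
      have nz: "(l-1)*(v$1) \<noteq> 0" using v l by simp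
      have e: "l * v$1 - v$1 = (l-1)*(v$1)" by (simp add: algebra_simps)
      show ?thesis using nz by (simp add: vec4_eq w1_def w2_def B comps e)
    qed
    then have o: "bo \<in> I" using w sc df by metis
    have "ba = (1/l) *\<^sub>R Bmult l t ba bo" using l by (simp add: vec4_eq B comps)
    then have a: "ba \<in> I" using o cl sc by metis
    have "bb = (1/l) *\<^sub>R Bmult l t bb bo" using l by (simp add: vec4_eq B comps)
    then have b: "bb \<in> I" using o cl sc by metis
    have "bc = Bmult l t ba bb - p *\<^sub>R ba - q *\<^sub>R bb" by (simp add: vec4_eq B comps)
    then have c: "bc \<in> I" using a b cl sc df by metis
    have "I = UNIV"
    proof (rule set_eqI, rule iffI)
      fix x :: "real^4"
      have "x = (x$1) *\<^sub>R bo + (x$2) *\<^sub>R ba + (x$3) *\<^sub>R bb + (x$4) *\<^sub>R bc" by (simp add: vec4_eq comps)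
      then show "x \<in> I" using o a b c add sc by metis
    qed simp
    then show False using nU by simp
  qed
  have s2a: "\<And>v. v \<in> I \<Longrightarrow> v$2 *\<^sub>R ba + v$3 *\<^sub>R bb \<in> I"
  proof -
    fix v assume v: "v \<in> I"
    have "v$2 *\<^sub>R ba + v$3 *\<^sub>R bb = (1/l) *\<^sub>R Bmult l t bo v"
      using l s1 v by (simp add: vec4_eq B comps)
    then show "v$2 *\<^sub>R ba + v$3 *\<^sub>R bb \<in> I" using v cl sc by metis
  qed
  have s2b: "\<And>v. v \<in> I \<Longrightarrow> v$4 *\<^sub>R bc \<in> I"
  proof -
    fix v assume v: "v \<in> I"
    have "v$4 *\<^sub>R bc = v - (v$2 *\<^sub>R ba + v$3 *\<^sub>R bb)"
      using s1 v by (simp add: vec4_eq comps)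
    then show "v$4 *\<^sub>R bc \<in> I" using v s2a df by metis
  qed
  have c: "bc \<in> I"
  proof -
    obtain v where v: "v \<in> I" "v \<noteq> 0" using ne sub z by blast
    have "v$2 \<noteq> 0 \<or> v$3 \<noteq> 0 \<or> v$4 \<noteq> 0" using v s1 by (auto simp: vec4_eq)
    moreover have "bc \<in> I" if "v$4 \<noteq> 0"
    proof -
      have "bc = (1/v$4) *\<^sub>R (v$4 *\<^sub>R bc)" using that by simp
      then show ?thesis using s2b v sc by metis
    qed
    moreover have "bc \<in> I" if "v$2 \<noteq> 0 \<or> v$3 \<noteq> 0"
    proof -
      define u where "u = v$2 *\<^sub>R ba + v$3 *\<^sub>R bb"
      have u: "u \<in> I" using s2a v u_def by simp
      have "(Bmult l t ba u)$4 *\<^sub>R bc \<in> I" "(Bmult l t bb u)$4 *\<^sub>R bc \<in> I"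
        using u cl s2b by auto
      then have "v$3 *\<^sub>R bc \<in> I" "v$2 *\<^sub>R bc \<in> I" by (simp_all add: B u_def comps)
      then show ?thesis using that unsc by blast
    qed
    ultimately show ?thesis by blast
  qed
  have getab: "ba \<in> I \<and> bb \<in> I"
    if "x *\<^sub>R ba + y *\<^sub>R bb \<in> I" "r *\<^sub>R ba + s *\<^sub>R bb \<in> I" "x * s - y * r \<noteq> 0" for x y r s
  proof -
    define d where "d = x * s - y * r"
    have dn: "d \<noteq> 0" using that(3) d_def by simp
    have k1: "(s/d)*x - (y/d)*r = 1" "(s/d)*y - (y/d) * s = 0" "(x/d)*r - (r/d)*x = 0" "(x/d) * s - (r/d) * y = 1"
    proof -
      have e1: "(s/d)*x - (y/d)*r = (x * s - y * r)/d" "(x/d) * s - (r/d) * y = (x * s - y * r)/d"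
        using dn by (simp_all add: field_simps)
      show "(s/d)*x - (y/d)*r = 1" "(x/d) * s - (r/d) * y = 1" unfolding e1 using dn d_def by simp_all
      show "(s/d)*y - (y/d) * s = 0" "(x/d)*r - (r/d)*x = 0" by (simp_all add: field_simps)
    qed
    have "ba = (s/d) *\<^sub>R (x *\<^sub>R ba + y *\<^sub>R bb) - (y/d) *\<^sub>R (r *\<^sub>R ba + s *\<^sub>R bb)"
      using k1 by (simp add: vec4_eq comps)
    moreover have "bb = (x/d) *\<^sub>R (r *\<^sub>R ba + s *\<^sub>R bb) - (r/d) *\<^sub>R (x *\<^sub>R ba + y *\<^sub>R bb)"
      using k1 by (simp add: vec4_eq comps)
    ultimately show ?thesis using that sc df by metis
  qed
  show ?thesis
  proof (cases "\<exists>v\<in>I. v$2 \<noteq> 0")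
    case hA: True
    show ?thesis
    proof (cases "\<exists>v\<in>I. v$3 \<noteq> 0")
      case hB: True
      have "ba \<in> I \<and> bb \<in> I"
      proof (cases "\<exists>v\<in>I. v$2 \<noteq> 0 \<and> v$3 \<noteq> 0")
        case True
        then obtain v where v: "v \<in> I" "v$2 \<noteq> 0" "v$3 \<noteq> 0" by auto
        define x where "x = v$2"
        define y where "y = v$3"
        have u: "x *\<^sub>R ba + y *\<^sub>R bb \<in> I" using s2a v x_def y_def by simp
        have "(x + y*p) *\<^sub>R ba + (y*q) *\<^sub>R bb = Bmult l t ba (x *\<^sub>R ba + y *\<^sub>R bb) - y *\<^sub>R bc"
          by (simp add: vec4_eq B comps)
        then have r1: "(x + y*p) *\<^sub>R ba + (y*q) *\<^sub>R bb \<in> I" using u c cl sc df by metis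
        have "(p*x) *\<^sub>R ba + (x*q + y) *\<^sub>R bb = Bmult l t bb (x *\<^sub>R ba + y *\<^sub>R bb) - x *\<^sub>R bc"
          by (simp add: vec4_eq B comps)
        then have r2: "(p*x) *\<^sub>R ba + (x*q + y) *\<^sub>R bb \<in> I" using u c cl sc df by metis
        have xy: "x \<noteq> 0" "y \<noteq> 0" using v x_def y_def by auto
        have pq: "p + q \<noteq> 1" using l by (simp add: p_def q_def field_simps)
        have "x * (y*q) - y * (x + y*p) \<noteq> 0 \<or> x * (x*q+y) - y * (p*x) \<noteq> 0"
        proof (rule ccontr)
          assume "\<not> ?thesis"
          then have e1: "x * (y*q) - y * (x + y*p) = 0" and e2: "x * (x*q+y) - y * (p*x) = 0" by auto
          from e1 xy have e1': "x*q = x + y*p"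
            by (metis (no_types, lifting) eq_iff_diff_eq_0 mult.commute mult.left_commute mult_left_cancel distrib_left)
          from e2 xy have e2': "x*q + y = y*p"
            by (metis (no_types, lifting) eq_iff_diff_eq_0 mult.commute mult.left_commute mult_left_cancel)
          have "x = - y" using e1' e2' by linarith
          then have "x*q = x - x*p" using e1' by simp
          then have "q = 1 - p" using xy by (metis mult.commute mult_cancel_left right_diff_distrib mult_1_right)
          then show False using pq by simp
        qed
        then show ?thesis using getab u r1 r2 by blast
      next
        case False
        then obtain v w where v: "v \<in> I" "v$2 \<noteq> 0" "v$3 = 0" and w: "w \<in> I" "w$3 \<noteq> 0" "w$2 = 0"
          using hA hB by blast
        have "v$2 *\<^sub>R ba + 0 *\<^sub>R bb \<in> I" "0 *\<^sub>R ba + w$3 *\<^sub>R bb \<in> I"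
          using s2a[OF v(1)] s2a[OF w(1)] v w by auto
        moreover have "v$2 * w$3 - 0 * 0 \<noteq> 0" using v w by simp
        ultimately show ?thesis using getab by blast
      qed
      then show ?thesis using abI s1 c by blast
    next
      case hB: False
      obtain v where v: "v \<in> I" "v$2 \<noteq> 0" using hA by auto
      have "v$2 *\<^sub>R ba \<in> I" using s2a[OF v(1)] hB v by auto
      then have a: "ba \<in> I" using v unsc by blast
      have "Bmult l t bb ba \<in> I" using a cl by auto
      then have "q = 0" using hB by (force simp: B comps)
      then have q0: "l + t - 1 = 0" using l by (simp add: q_def)
      have "I = Sac"
      proof
        show "I \<subseteq> Sac" using s1 hB by (auto simp: Sac_def)
        show "Sac \<subseteq> I"
        proof
          fix x assume "x \<in> Sac"
          then have "x = (x$2) *\<^sub>R ba + (x$4) *\<^sub>R bc" by (simp add: Sac_def vec4_eq comps)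
          then show "x \<in> I" using a c add sc by metis
        qed
      qed
      then show ?thesis using q0 by blast
    qed
  next
    case hA: False
    show ?thesis
    proof (cases "\<exists>v\<in>I. v$3 \<noteq> 0")
      case hB: True
      obtain v where v: "v \<in> I" "v$3 \<noteq> 0" using hB by auto
      have "v$3 *\<^sub>R bb \<in> I" using s2a[OF v(1)] hA v by auto
      then have b: "bb \<in> I" using v unsc by blast
      have "Bmult l t ba bb \<in> I" using b cl by auto
      then have "p = 0" using hA by (force simp: B comps)
      then have p0: "l - t = 0" using l by (simp add: p_def)
      have "I = Sbc"
      proof
        show "I \<subseteq> Sbc" using s1 hA by (auto simp: Sbc_def)
        show "Sbc \<subseteq> I"
        proof
          fix x assume "x \<in> Sbc"
          then have "x = (x$3) *\<^sub>R bb + (x$4) *\<^sub>R bc" by (simp add: Sbc_def vec4_eq comps)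
          then show "x \<in> I" using b c add sc by metis
        qed
      qed
      then show ?thesis using p0 by blast
    next
      case hB: False
      have "I = Sc"
      proof
        show "I \<subseteq> Sc" using s1 hA hB by (auto simp: Sc_def)
        show "Sc \<subseteq> I"
        proof
          fix x assume "x \<in> Sc"
          then have "x = (x$4) *\<^sub>R bc" by (simp add: Sc_def vec4_eq comps)
          then show "x \<in> I" using c sc by metis
        qed
      qed
      then show ?thesis by blast
    qed
  qed
qed


lemma charI:
  assumes "0 < l" "l < 1"
  shows "{I. nonzero_proper_ideal l t I} =
    {I. I = Sc \<or> I = SW \<or> (l + t - 1 = 0 \<and> I = Sac) \<or> (l - t = 0 \<and> I = Sbc)}"
proof (rule set_eqI, rule iffI)
  fix I assume "I \<in> {I. nonzero_proper_ideal l t I}"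
  then show "I \<in> {I. I = Sc \<or> I = SW \<or> (l + t - 1 = 0 \<and> I = Sac) \<or> (l - t = 0 \<and> I = Sbc)}"
    using classify[OF assms] by simp
next
  fix I assume "I \<in> {I. I = Sc \<or> I = SW \<or> (l + t - 1 = 0 \<and> I = Sac) \<or> (l - t = 0 \<and> I = Sbc)}"
  then have "I = Sc \<or> I = SW \<or> (l + t - 1 = 0 \<and> I = Sac) \<or> (l - t = 0 \<and> I = Sbc)" by simp
  then show "I \<in> {I. nonzero_proper_ideal l t I}"
    using nz_c nz_W nz_ac nz_bc by (elim disjE conjE) simp_all
qed

theorem mainTheorem7:
  fixes lam bet :: real
  assumes "0 < lam" "lam < 1" "0 < bet" "bet < 1"
  shows "(bet = lam \<and> lam \<noteq> 1/2 \<longrightarrow>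
            {I. nonzero_proper_ideal lam bet I} = {span {bc}, span {bb, bc}, span {ba, bb, bc}})
       \<and> (bet = 1 - lam \<and> lam \<noteq> 1/2 \<longrightarrow>
            {I. nonzero_proper_ideal lam bet I} = {span {bc}, span {ba, bc}, span {ba, bb, bc}})
       \<and> (bet \<noteq> lam \<and> bet \<noteq> 1 - lam \<longrightarrow>
            {I. nonzero_proper_ideal lam bet I} = {span {bc}, span {ba, bb, bc}})
       \<and> (lam = 1/2 \<and> bet = 1/2 \<longrightarrow>
            {I. nonzero_proper_ideal lam bet I} =
              {span {bc}, span {ba, bc}, span {bb, bc}, span {ba, bb, bc}})"
  unfolding charI[OF assms(1,2)] span_c span_ac span_bc span_abc
proof (intro conjI impI)
  assume h: "bet = lam \<and> lam \<noteq> 1/2"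
  then have "lam + bet - 1 \<noteq> 0" "lam - bet = 0" by auto
  then show "{I. I = Sc \<or> I = SW \<or> (lam + bet - 1 = 0 \<and> I = Sac) \<or> (lam - bet = 0 \<and> I = Sbc)} = {Sc, Sbc, SW}"
    by blast
next
  assume h: "bet = 1 - lam \<and> lam \<noteq> 1/2"
  then have "lam + bet - 1 = 0" "lam - bet \<noteq> 0" by auto
  then show "{I. I = Sc \<or> I = SW \<or> (lam + bet - 1 = 0 \<and> I = Sac) \<or> (lam - bet = 0 \<and> I = Sbc)} = {Sc, Sac, SW}"
    by blast
next
  assume h: "bet \<noteq> lam \<and> bet \<noteq> 1 - lam"
  then have "lam + bet - 1 \<noteq> 0" "lam - bet \<noteq> 0" by auto
  then show "{I. I = Sc \<or> I = SW \<or> (lam + bet - 1 = 0 \<and> I = Sac) \<or> (lam - bet = 0 \<and> I = Sbc)} = {Sc, SW}"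
    by blast
next
  assume h: "lam = 1/2 \<and> bet = 1/2"
  then have "lam + bet - 1 = 0" "lam - bet = 0" by auto
  then show "{I. I = Sc \<or> I = SW \<or> (lam + bet - 1 = 0 \<and> I = Sac) \<or> (lam - bet = 0 \<and> I = Sbc)} = {Sc, Sac, Sbc, SW}"
    by blast
qed

end
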